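(* If a partial isometry $W\in\mathbf{M}_{2N}(\mathbb{C})$ is self-dual ($W^\sharp=W$), then the initial space $(\ker W)^\perp$ of $W$ has even dimension and $\mathcal{T}$ maps the initial space isometrically onto the final space $(\ker W^* )^\perp$ of $W$.
   Context: A partial isometry is $W$ with $WW^*W=W$. For $X\in\mathbf{M}_{2N}(\mathbb{C})$ in $N\times N$ blocks $X=\begin{bmatrix}A&B\\C&D\end{bmatrix}$, $X^{\sharp}=\begin{bmatrix}D^{\mathrm T}&-B^{\mathrm T}\\-C^{\mathrm T}&A^{\mathrm T}\end{bmatrix}$. $\mathcal{T}:\mathbb{C}^{2N}\to\mathbb{C}^{2N}$ is the conjugate-linear map $\mathcal{T}\begin{bmatrix}\mathbf v\\ \mathbf w\end{bmatrix}=\begin{bmatrix}-\overline{\mathbf w}\\ \overline{\mathbf v}\end{bmatrix}$ for $\mathbf v,\mathbf w\in\mathbb{C}^N$. *)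

theory Defs
  imports "HOL-Analysis.Analysis"
begin

text \<open>Complex 2N x 2N matrices are indexed by the type 'n + 'n (N = CARD('n)):
  Inl i is the i-th index of the first block, Inr i of the second.\<close>

definition cadjoint :: "complex^'m::finite^'k::finite \<Rightarrow> complex^'k^'m" where
  "cadjoint X = (\<chi> i j. cnj (X $ j $ i))"

definition partial_isometry :: "complex^'n::finite^'n \<Rightarrow> bool" where
  "partial_isometry W \<longleftrightarrow> W ** cadjoint W ** W = W"

text \<open>X sharp = [[D^T, -B^T], [-C^T, A^T]] for X = [[A, B], [C, D]].\<close>
definition sharp :: "complex^('n::finite+'n)^('n+'n) \<Rightarrow> complex^('n+'n)^('n+'n)" where
  "sharp X = (\<chi> r c. case (r, c) of
      (Inl i, Inl j) \<Rightarrow> X $ Inr j $ Inr i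
    | (Inl i, Inr j) \<Rightarrow> - (X $ Inl j $ Inr i)
    | (Inr i, Inl j) \<Rightarrow> - (X $ Inr j $ Inl i)
    | (Inr i, Inr j) \<Rightarrow> X $ Inl j $ Inl i)"

definition Tmap :: "complex^('n::finite+'n) \<Rightarrow> complex^('n+'n)" where
  "Tmap x = (\<chi> r. case r of
      Inl i \<Rightarrow> - cnj (x $ Inr i)
    | Inr i \<Rightarrow> cnj (x $ Inl i))"

definition cinner :: "complex^'n::finite \<Rightarrow> complex^'n \<Rightarrow> complex" where
  "cinner v w = (\<Sum>i\<in>UNIV. v $ i * cnj (w $ i))"

definition orth_compl :: "(complex^'n::finite) set \<Rightarrow> (complex^'n) set" where
  "orth_compl S = {v. \<forall>w\<in>S. cinner v w = 0}"

definition mker :: "complex^'m::finite^'k::finite \<Rightarrow> (complex^'m) set" where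
  "mker X = {v. X *v v = 0}"

end

theory Submission
  imports Defs
begin

lemma sum_UNIV_plus:
  "(\<Sum>r\<in>(UNIV::('a::finite+'a) set). f r) = (\<Sum>i\<in>UNIV. f (Inl i)) + (\<Sum>i\<in>UNIV. f (Inr i))"
  by (subst UNIV_Plus_UNIV[symmetric], subst sum.Plus) (auto simp: o_def)

lemma cinner_add_left: "cinner (x + y) z = cinner x z + cinner y z"
  by (simp add: cinner_def distrib_right sum.distrib)
lemma cinner_diff_left: "cinner (x - y) z = cinner x z - cinner y z"
  by (simp add: cinner_def left_diff_distrib sum_subtractf)
lemma cinner_scale_left: "cinner (c *s x) z = c * cinner x z"
  by (simp add: cinner_def sum_distrib_left mult.assoc)
lemma cinner_neg_right: "cinner x (- y) = - cinner x y"
  by (simp add: cinner_def sum_negf)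
lemma cinner_zero_right[simp]: "cinner x 0 = 0"
  by (simp add: cinner_def)
lemma cinner_zero_left[simp]: "cinner 0 x = 0"
  by (simp add: cinner_def)
lemma cinner_commute: "cinner x y = cnj (cinner y x)"
  by (simp add: cinner_def mult.commute)

lemma cinner_self: "cinner x x = complex_of_real ((norm x)^2)"
proof -
  have "(norm x)^2 = (\<Sum>i\<in>UNIV. (norm (x $ i))^2)"
    by (simp add: norm_vec_def L2_set_def sum_nonneg)
  moreover have "cinner x x = (\<Sum>i\<in>UNIV. complex_of_real ((norm (x$i))^2))"
    unfolding cinner_def by (rule sum.cong[OF refl]) (rule complex_norm_square[symmetric])
  ultimately show ?thesis
    by (simp add: of_real_sum)
qed

lemma cinner_self_eq_0: "cinner x x = 0 \<longleftrightarrow> x = 0"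
  by (simp add: cinner_self)

lemma cinner_adj: "cinner (X *v a) b = cinner a (cadjoint X *v b)"
proof -
  have "cinner (X *v a) b = (\<Sum>i\<in>UNIV. \<Sum>j\<in>UNIV. X$i$j * a$j * cnj (b$i))"
    by (simp add: cinner_def matrix_vector_mult_def sum_distrib_right)
  also have "\<dots> = (\<Sum>j\<in>UNIV. \<Sum>i\<in>UNIV. X$i$j * a$j * cnj (b$i))"
    by (rule sum.swap)
  also have "\<dots> = cinner a (cadjoint X *v b)"
    by (simp add: cinner_def matrix_vector_mult_def cadjoint_def sum_distrib_left mult_ac)
  finally show ?thesis .
qed

lemma cadjoint_cadjoint[simp]: "cadjoint (cadjoint X) = X"
  by (simp add: cadjoint_def vec_eq_iff)

lemma cinner_adj2: "cinner (cadjoint X *v a) b = cinner a (X *v b)"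
  using cinner_adj[of "cadjoint X"] by simp

lemma cadjoint_mult: "cadjoint (A ** B) = cadjoint B ** cadjoint A"
  unfolding cadjoint_def matrix_matrix_mult_def vec_eq_iff
  by (simp add: mult.commute)

lemma pi_vec: assumes "X ** cadjoint X ** X = X"
  shows "X *v (cadjoint X *v (X *v x)) = X *v x"
  using assms by (metis matrix_vector_mul_assoc)

lemma pi_adj: assumes "X ** cadjoint X ** X = X"
  shows "cadjoint X ** cadjoint (cadjoint X) ** cadjoint X = cadjoint X"
proof -
  have "cadjoint (X ** cadjoint X ** X) = cadjoint X" using assms by simp
  then show ?thesis by (simp add: cadjoint_mult matrix_mul_assoc)
qed

lemma orth_char: assumes "X ** cadjoint X ** X = X"
  shows "orth_compl (mker X) = {x. cadjoint X *v (X *v x) = x}"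
proof (intro set_eqI iffI)
  fix x assume x: "x \<in> orth_compl (mker X)"
  define d where "d = x - cadjoint X *v (X *v x)"
  have "X *v d = 0" using pi_vec[OF assms, of x]
    by (simp add: d_def matrix_vector_mult_diff_distrib)
  then have d: "d \<in> mker X" by (simp add: mker_def)
  have 1: "cinner x d = 0" using x d by (simp add: orth_compl_def)
  have 2: "cinner (cadjoint X *v (X *v x)) d = 0"
    using cinner_adj2[of X "X *v x" d] \<open>X *v d = 0\<close> by simp
  have "cinner d d = 0"
    using 1 2 by (simp add: d_def cinner_diff_left[of x])
  then show "x \<in> {x. cadjoint X *v (X *v x) = x}"
    by (simp add: cinner_self_eq_0 d_def)
next
  fix x assume "x \<in> {x. cadjoint X *v (X *v x) = x}"
  then have x: "cadjoint X *v (X *v x) = x" by simp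
  show "x \<in> orth_compl (mker X)"
    unfolding orth_compl_def mker_def
  proof (intro CollectI ballI)
    fix w assume "w \<in> {v. X *v v = 0}"
    then have "X *v w = 0" by simp
    then show "cinner x w = 0"
      using cinner_adj2[of X "X *v x" w] x by simp
  qed
qed

context
  fixes W :: "complex^('n::finite + 'n)^('n + 'n)"
  assumes sh: "sharp W = W"
begin

lemma sh1: "W $ Inl i $ Inl j = W $ Inr j $ Inr i"
  using arg_cong[OF sh, of "\<lambda>M. M $ Inl i $ Inl j"] by (simp add: sharp_def)
lemma sh2: "W $ Inl i $ Inr j = - W $ Inl j $ Inr i"
  using arg_cong[OF sh, of "\<lambda>M. M $ Inl i $ Inr j"] by (simp add: sharp_def)
lemma sh3: "W $ Inr i $ Inl j = - W $ Inr j $ Inl i"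
  using arg_cong[OF sh, of "\<lambda>M. M $ Inr i $ Inl j"] by (simp add: sharp_def)

lemma Tmap_W: "Tmap (W *v x) = cadjoint W *v Tmap x"
proof -
  have "Tmap (W *v x) $ r = (cadjoint W *v Tmap x) $ r" for r
  proof (cases r)
    case (Inl i)
    have a: "\<And>j. W $ Inr i $ Inl j = - W $ Inr j $ Inl i" by (rule sh3)
    have b: "\<And>j. W $ Inr i $ Inr j = W $ Inl j $ Inl i" by (simp add: sh1)
    show ?thesis using Inl
      by (simp add: Tmap_def cadjoint_def matrix_vector_mult_def sum_UNIV_plus a b sum_negf)
  next
    case (Inr i)
    have a: "\<And>j. W $ Inl i $ Inr j = - W $ Inl j $ Inr i" by (rule sh2)
    have b: "\<And>j. W $ Inl i $ Inl j = W $ Inr j $ Inr i" by (simp add: sh1)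
    show ?thesis using Inr
      by (simp add: Tmap_def cadjoint_def matrix_vector_mult_def sum_UNIV_plus a b sum_negf)
  qed
  then show ?thesis by (simp add: vec_eq_iff)
qed

lemma Tmap_Wadj: "Tmap (cadjoint W *v x) = W *v Tmap x"
proof -
  have "Tmap (cadjoint W *v x) $ r = (W *v Tmap x) $ r" for r
  proof (cases r)
    case (Inl i)
    have a: "\<And>j. W $ Inl i $ Inr j = - W $ Inl j $ Inr i" by (rule sh2)
    have b: "\<And>j. W $ Inr j $ Inr i = W $ Inl i $ Inl j" by (simp add: sh1)
    show ?thesis using Inl
      by (simp add: Tmap_def cadjoint_def matrix_vector_mult_def sum_UNIV_plus a b sum_negf)
  next
    case (Inr i)
    have a: "\<And>j. W $ Inr i $ Inl j = - W $ Inr j $ Inl i" by (rule sh3)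
    have b: "\<And>j. W $ Inl j $ Inl i = W $ Inr i $ Inr j" by (simp add: sh1)
    show ?thesis using Inr
      by (simp add: Tmap_def cadjoint_def matrix_vector_mult_def sum_UNIV_plus a b sum_negf)
  qed
  then show ?thesis by (simp add: vec_eq_iff)
qed

end

lemma Tmap_Tmap: "Tmap (Tmap x) = - x"
  by (simp add: Tmap_def vec_eq_iff split: sum.splits)

lemma Tmap_neg: "Tmap (- x) = - Tmap x"
  by (simp add: Tmap_def vec_eq_iff split: sum.splits)

lemma cinner_Tmap: "cinner (Tmap a) (Tmap b) = cnj (cinner a b)"
  by (simp add: cinner_def Tmap_def sum_UNIV_plus mult.commute add.commute)

lemma norm_Tmap: "norm (Tmap v) = norm v"
proof -
  have "complex_of_real ((norm (Tmap v))^2) = complex_of_real ((norm v)^2)"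
    using cinner_Tmap[of v v] by (simp add: cinner_self)
  then have "(norm (Tmap v))^2 = (norm v)^2" using of_real_eq_iff by blast
  then show ?thesis by (simp add: power2_eq_iff_nonneg)
qed


lemma even_dim:
  fixes S :: "complex^'n::finite \<Rightarrow> complex^'n"
  assumes "vec.subspace U" "\<forall>x\<in>U. S x \<in> U" "\<forall>x\<in>U. S (S x) = - x"
    "\<forall>x\<in>U. \<forall>y\<in>U. cinner (S x) (S y) = cnj (cinner x y)"
  shows "even (vec.dim U)"
  using assms
proof (induction "vec.dim U" arbitrary: U rule: less_induct)
  case less
  note sU = less.prems(1) and inU = less.prems(2) and SS = less.prems(3) and au = less.prems(4)
  show ?case
  proof (cases "vec.dim U = 0")
    case True then show ?thesis by (metis even_zero)
  next
    case False
    then have "\<not> U \<subseteq> {0}" using vec.dim_eq_0 by simp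
    then obtain v where v: "v \<in> U" "v \<noteq> 0" by blast
    define w where "w = S v"
    have w: "w \<in> U" using inU v by (simp add: w_def)
    have vv: "cinner v v \<noteq> 0" using v by (simp add: cinner_self_eq_0)
    have ww: "cinner w w \<noteq> 0" using au v vv by (simp add: w_def)
    have "cinner w v = cinner (S v) (- S (S v))" using SS v by (simp add: w_def)
    also have "\<dots> = - cnj (cinner v (S v))" using au v w by (simp add: cinner_neg_right w_def)
    also have "\<dots> = - cinner w v" by (simp add: cinner_commute[of v] w_def)
    finally have wv: "cinner w v = 0" by simp
    then have vw: "cinner v w = 0" by (simp add: cinner_commute[of v])
    define U' where "U' = {x\<in>U. cinner x v = 0 \<and> cinner x w = 0}"
    have U'U: "U' \<subseteq> U" by (auto simp: U'_def)
    have sub: "vec.subspace U'"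
      unfolding vec.subspace_def U'_def
      using sU vec.subspace_0 vec.subspace_add vec.subspace_scale
      by (auto simp: cinner_add_left cinner_scale_left)
    have inv: "\<forall>x\<in>U'. S x \<in> U'"
    proof
      fix x assume x: "x \<in> U'"
      then have xU: "x \<in> U" and x1: "cinner x v = 0" and x2: "cinner x w = 0" by (auto simp: U'_def)
      have "cinner (S x) v = cinner (S x) (- S (S v))" using SS v by simp
      also have "\<dots> = - cnj (cinner x w)" using au xU w by (simp add: cinner_neg_right w_def)
      finally have 1: "cinner (S x) v = 0" using x2 by simp
      have 2: "cinner (S x) w = 0" using au xU v x1 by (simp add: w_def)
      show "S x \<in> U'" using 1 2 inU xU by (simp add: U'_def)
    qed
    obtain B where B: "B \<subseteq> U'" "vec.independent B" "U' \<subseteq> vec.span B" "card B = vec.dim U'"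
      by (rule vec.basis_exists)
    have spanB: "vec.span B \<subseteq> U'" by (rule vec.span_minimal[OF B(1) sub])
    have finB: "finite B" using B(2) by (rule vec.finiteI_independent)
    have wnot: "w \<notin> vec.span B" using spanB ww by (auto simp: U'_def)
    have vnot: "v \<notin> vec.span (insert w B)"
    proof
      assume "v \<in> vec.span (insert w B)"
      then obtain k where "v - k *s w \<in> vec.span B" by (auto simp: vec.span_insert)
      then have "v - k *s w \<in> U'" using spanB by blast
      then have "cinner (v - k *s w) v = 0" by (simp add: U'_def)
      then show False using vv wv by (simp add: cinner_diff_left cinner_scale_left)
    qed
    let ?B = "insert v (insert w B)"
    have indep: "vec.independent ?B"
      using vnot wnot B(2) by (intro vec.independent_insertI) auto
    have vnot': "v \<notin> insert w B" using vnot vec.span_base by blast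
    have wnot': "w \<notin> B" using wnot vec.span_base by blast
    have card: "card ?B = card B + 2" using vnot' wnot' finB by simp
    have subB: "?B \<subseteq> U" using v w B(1) U'U by auto
    have spans: "U \<subseteq> vec.span ?B"
    proof
      fix x assume xU: "x \<in> U"
      define a where "a = cinner x v / cinner v v"
      define b where "b = cinner x w / cinner w w"
      define u where "u = x - a *s v - b *s w"
      have uU: "u \<in> U" unfolding u_def
        using sU xU v w by (intro vec.subspace_diff vec.subspace_scale) auto
      have "cinner u v = 0" using vv wv
        by (simp add: u_def cinner_diff_left cinner_scale_left a_def)
      moreover have "cinner u w = 0" using ww vw
        by (simp add: u_def cinner_diff_left cinner_scale_left b_def)
      ultimately have "u \<in> U'" using uU by (simp add: U'_def)
      then have "u \<in> vec.span ?B" using B(3) vec.span_mono[of B ?B] by auto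
      moreover have "a *s v \<in> vec.span ?B" by (intro vec.span_scale vec.span_base) auto
      moreover have "b *s w \<in> vec.span ?B" by (intro vec.span_scale vec.span_base) auto
      ultimately have "u + a *s v + b *s w \<in> vec.span ?B" by (intro vec.span_add)
      moreover have "u + a *s v + b *s w = x" by (simp add: u_def)
      ultimately show "x \<in> vec.span ?B" by simp
    qed
    have "card ?B = vec.dim U" by (rule vec.basis_card_eq_dim[OF subB spans indep])
    then have dimU: "vec.dim U = vec.dim U' + 2" using card B(4) by simp
    have "even (vec.dim U')"
    proof (rule less.hyps)
      show "vec.dim U' < vec.dim U" using dimU by simp
      show "\<forall>x\<in>U'. S (S x) = - x" using SS U'U by blast
      show "\<forall>x\<in>U'. \<forall>y\<in>U'. cinner (S x) (S y) = cnj (cinner x y)" using au U'U by blast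
    qed (use sub inv in auto)
    then show ?thesis using dimU by simp
  qed
qed


lemma subspace_orth: "vec.subspace (orth_compl A)"
  unfolding vec.subspace_def orth_compl_def
  by (auto simp: cinner_add_left cinner_scale_left)

theorem mainTheorem13:
  fixes W :: "complex^('n::finite + 'n)^('n + 'n)"
  assumes "partial_isometry W"
    and "sharp W = W"
  shows "even (vec.dim (orth_compl (mker W)))
    \<and> Tmap ` orth_compl (mker W) = orth_compl (mker (cadjoint W))
    \<and> (\<forall>v\<in>orth_compl (mker W). norm (Tmap v) = norm v)"
proof -
  have pi: "W ** cadjoint W ** W = W" using assms(1) by (simp add: partial_isometry_def)
  have V: "orth_compl (mker W) = {x. cadjoint W *v (W *v x) = x}" by (rule orth_char[OF pi])
  have F: "orth_compl (mker (cadjoint W)) = {y. W *v (cadjoint W *v y) = y}"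
    using orth_char[OF pi_adj[OF pi]] by simp
  note TW = Tmap_W[OF assms(2)] and TWa = Tmap_Wadj[OF assms(2)]
  have VF: "Tmap x \<in> orth_compl (mker (cadjoint W))" if "x \<in> orth_compl (mker W)" for x
  proof -
    have "W *v (cadjoint W *v Tmap x) = W *v Tmap (W *v x)" by (simp add: TW)
    also have "\<dots> = Tmap (cadjoint W *v (W *v x))" by (simp add: TWa)
    also have "\<dots> = Tmap x" using that V by simp
    finally show ?thesis using F by simp
  qed
  have FV: "Tmap y \<in> orth_compl (mker W)" if "y \<in> orth_compl (mker (cadjoint W))" for y
  proof -
    have "cadjoint W *v (W *v Tmap y) = cadjoint W *v Tmap (cadjoint W *v y)" by (simp add: TWa)
    also have "\<dots> = Tmap (W *v (cadjoint W *v y))" by (simp add: TW)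
    also have "\<dots> = Tmap y" using that F by simp
    finally show ?thesis using V by simp
  qed
  have img: "Tmap ` orth_compl (mker W) = orth_compl (mker (cadjoint W))"
  proof (intro set_eqI iffI)
    fix y assume "y \<in> Tmap ` orth_compl (mker W)"
    then show "y \<in> orth_compl (mker (cadjoint W))" using VF by blast
  next
    fix y assume y: "y \<in> orth_compl (mker (cadjoint W))"
    have "- Tmap y \<in> orth_compl (mker W)"
      using FV[OF y] vec.subspace_neg[OF subspace_orth] by blast
    moreover have "Tmap (- Tmap y) = y" by (simp add: Tmap_neg Tmap_Tmap)
    ultimately show "y \<in> Tmap ` orth_compl (mker W)" by (metis image_eqI)
  qed
  define S where "S x = Tmap (W *v x)" for x
  have ev: "even (vec.dim (orth_compl (mker W)))"
  proof (rule even_dim[of _ S])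
    show "vec.subspace (orth_compl (mker W))" by (rule subspace_orth)
    show "\<forall>x\<in>orth_compl (mker W). S x \<in> orth_compl (mker W)"
    proof
      fix x assume "x \<in> orth_compl (mker W)"
      have "W *v x \<in> orth_compl (mker (cadjoint W))" using F pi_vec[OF pi, of x] by simp
      then show "S x \<in> orth_compl (mker W)" using FV by (simp add: S_def)
    qed
    show "\<forall>x\<in>orth_compl (mker W). S (S x) = - x"
    proof
      fix x assume x: "x \<in> orth_compl (mker W)"
      have "S (S x) = Tmap (Tmap (cadjoint W *v (W *v x)))" by (simp add: S_def TWa)
      also have "\<dots> = - x" using x V by (simp add: Tmap_Tmap)
      finally show "S (S x) = - x" .
    qed
    show "\<forall>x\<in>orth_compl (mker W). \<forall>y\<in>orth_compl (mker W). cinner (S x) (S y) = cnj (cinner x y)"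
    proof (intro ballI)
      fix x y assume x: "x \<in> orth_compl (mker W)" and y: "y \<in> orth_compl (mker W)"
      have "cinner (W *v x) (W *v y) = cinner (cadjoint W *v (W *v x)) y"
        by (simp add: cinner_adj2)
      also have "\<dots> = cinner x y" using x V by simp
      finally show "cinner (S x) (S y) = cnj (cinner x y)" by (simp add: S_def cinner_Tmap)
    qed
  qed
  show ?thesis using ev img norm_Tmap by blast
qed

end
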